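(* Let the prior joint distribution of the losses $(X,Y)$ be bivariate normal with means $\mu_X,\mu_Y$, standard deviations $\sigma_X,\sigma_Y>0$ and correlation $\rho$ with $|\rho|<1$. Let $\sigma_1>0$, $\alpha\in(0,1)$, and let $\tilde\sigma_X^2$ denote the posterior variance of $X$ (under the entropy-pooling posterior described in the context). (i) Under the equality view $\tilde\sigma_X^2=\sigma_1^2$, $$\mathrm{CoVaR}_\alpha^{Y|\tilde\sigma_X^2=\sigma_1^2}=\mu_Y+\sigma_Y\left(1-\rho^2+\rho^2\frac{\sigma_1^2}{\sigma_X^2}\right)^{1/2}\Phi^{-1}(\alpha).$$ (ii) Under the inequality view $\tilde\sigma_X^2\le\sigma_1^2$: if $\sigma_X^2\le\sigma_1^2$, then $\mathrm{CoVaR}_\alpha^{Y|\tilde\sigma_X^2\le\sigma_1^2}=\mathrm{VaR}_\alpha^Y$; if $\sigma_X^2>\sigma_1^2$, then $\mathrm{CoVaR}_\alpha^{Y|\tilde\sigma_X^2\le\sigma_1^2}=\mathrm{CoVaR}_\alpha^{Y|\tilde\sigma_X^2=\sigma_1^2}$. (iii) Under the inequality view $\tilde\sigma_X^2\ge\sigma_1^2$: if $\sigma_X^2\ge\sigma_1^2$, then $\mathrm{CoVaR}_\alpha^{Y|\tilde\sigma_X^2\ge\sigma_1^2}=\mathrm{VaR}_\alpha^Y$; if $\sigma_X^2<\sigma_1^2$, then $\mathrm{CoVaR}_\alpha^{Y|\tilde\sigma_X^2\ge\sigma_1^2}=\mathrm{CoVaR}_\alpha^{Y|\tilde\sigma_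X^2=\sigma_1^2}$.
   Context: Entropy-pooling framework: given a "view" $V$ (a constraint on the posterior parameters), the posterior distribution of $(X,Y)$ is the bivariate normal distribution with means $\tilde\mu_X,\tilde\mu_Y$, standard deviations $\tilde\sigma_X,\tilde\sigma_Y>0$ and correlation $\tilde\rho\in(-1,1)$ that minimizes the relative entropy (Kullback–Leibler divergence) $\varepsilon(\tilde f,f)=\int \tilde f\,(\ln\tilde f-\ln f)$ of its density $\tilde f$ with respect to the prior density $f$, among all bivariate normal distributions satisfying $V$. The general CoVaR under view $V$ is $\mathrm{CoVaR}_\alpha^{Y|V}=\tilde\mu_Y+\tilde\sigma_Y\Phi^{-1}(\alpha)$ (the $\alpha$-quantile of the posterior marginal of $Y$), where $\Phi$ is the standard normal cdf. $\mathrm{VaR}_\alpha^Y=\mu_Y+\sigma_Y\Phi^{-1}(\alpha)$. *)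

theory Defs
  imports "HOL-Probability.Probability"
begin

type_synonym bvn = "real \<times> real \<times> real \<times> real \<times> real"

definition muX :: "bvn \<Rightarrow> real" where "muX p = fst p"
definition muY :: "bvn \<Rightarrow> real" where "muY p = fst (snd p)"
definition sdX :: "bvn \<Rightarrow> real" where "sdX p = fst (snd (snd p))"
definition sdY :: "bvn \<Rightarrow> real" where "sdY p = fst (snd (snd (snd p)))"
definition corr :: "bvn \<Rightarrow> real" where "corr p = snd (snd (snd (snd p)))"

definition bvn_valid :: "bvn \<Rightarrow> bool" where
  "bvn_valid p \<longleftrightarrow> sdX p > 0 \<and> sdY p > 0 \<and> \<bar>corr p\<bar> < 1"

definition bvn_density :: "bvn \<Rightarrow> real \<times> real \<Rightarrow> real" where
  "bvn_density p z =
     (let x = fst z; y = snd z; mx = muX p; my = muY p;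
          sx = sdX p; sy = sdY p; r = corr p
      in 1 / (2 * pi * sx * sy * sqrt (1 - r\<^sup>2)) *
         exp (- 1 / (2 * (1 - r\<^sup>2)) *
              ((x - mx)\<^sup>2 / sx\<^sup>2 - 2 * r * (x - mx) * (y - my) / (sx * sy)
               + (y - my)\<^sup>2 / sy\<^sup>2)))"

definition rel_entropy :: "bvn \<Rightarrow> bvn \<Rightarrow> real" where
  "rel_entropy q p =
     (\<integral>z. bvn_density q z * (ln (bvn_density q z) - ln (bvn_density p z)) \<partial>lborel)"

definition is_posterior :: "bvn \<Rightarrow> (bvn \<Rightarrow> bool) \<Rightarrow> bvn \<Rightarrow> bool" where
  "is_posterior prior V q \<longleftrightarrow>
     bvn_valid q \<and> V q \<and>
     (\<forall>q'. bvn_valid q' \<and> V q' \<longrightarrow> rel_entropy q prior \<le> rel_entropy q' prior)"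

definition Phi :: "real \<Rightarrow> real" where
  "Phi x = measure (density lborel std_normal_density) {..x}"

definition Phi_inv :: "real \<Rightarrow> real" where
  "Phi_inv a = (THE x. Phi x = a)"

definition VaR :: "real \<Rightarrow> bvn \<Rightarrow> real" where
  "VaR \<alpha> p = muY p + sdY p * Phi_inv \<alpha>"

definition CoVaR_is :: "real \<Rightarrow> bvn \<Rightarrow> (bvn \<Rightarrow> bool) \<Rightarrow> real \<Rightarrow> bool" where
  "CoVaR_is \<alpha> prior V c \<longleftrightarrow>
     (\<exists>q. is_posterior prior V q) \<and>
     (\<forall>q. is_posterior prior V q \<longrightarrow> muY q + sdY q * Phi_inv \<alpha> = c)"

end

theory Submission
  imports Defs
begin


lemma nd_shift: "normal_density \<mu> \<sigma> (\<mu> + x) = normal_density 0 \<sigma> x"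
  by (simp add: normal_density_def)

definition mom :: "real \<Rightarrow> nat \<Rightarrow> real" where
  "mom \<sigma> j = (\<integral>x. normal_density 0 \<sigma> x * x ^ j \<partial>lborel)"
definition amom :: "real \<Rightarrow> nat \<Rightarrow> real" where
  "amom \<sigma> j = (\<integral>x. normal_density 0 \<sigma> x * \<bar>x\<bar> ^ j \<partial>lborel)"

lemma mom_shift: "(\<integral>y. normal_density \<mu> \<sigma> y * (y - \<mu>) ^ j \<partial>lborel) = mom \<sigma> j"
  using lborel_integral_real_affine[where c=1 and t=\<mu>, of "\<lambda>y. normal_density \<mu> \<sigma> y * (y - \<mu>) ^ j"]
  by (simp add: mom_def nd_shift)

lemma amom_shift: "(\<integral>y. normal_density \<mu> \<sigma> y * \<bar>y - \<mu>\<bar> ^ j \<partial>lborel) = amom \<sigma> j"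
  using lborel_integral_real_affine[where c=1 and t=\<mu>, of "\<lambda>y. normal_density \<mu> \<sigma> y * \<bar>y - \<mu>\<bar> ^ j"]
  by (simp add: amom_def nd_shift)

lemma mom0: "0 < \<sigma> \<Longrightarrow> mom \<sigma> 0 = 1"
  unfolding mom_def by simp
lemma mom1: "0 < \<sigma> \<Longrightarrow> mom \<sigma> 1 = 0"
  unfolding mom_def using integral_normal_moment_odd[of \<sigma> 0 0] by simp
lemma mom2: "0 < \<sigma> \<Longrightarrow> mom \<sigma> 2 = \<sigma>\<^sup>2"
  unfolding mom_def using integral_normal_moment_even[of \<sigma> 0 1] by simp

lemma mono_hbi:
  fixes m :: "real \<Rightarrow> real"
  assumes mm[measurable]: "m \<in> borel_measurable borel" and \<sigma>: "0 < \<sigma>" and \<tau>: "0 < \<tau>"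
  shows "has_bochner_integral lborel
    (\<lambda>z::real\<times>real. (normal_density a \<sigma> (fst z) * (fst z - a) ^ i) *
        (normal_density (m (fst z)) \<tau> (snd z) * (snd z - m (fst z)) ^ j)) (mom \<sigma> i * mom \<tau> j)"
proof -
  define F where "F = (\<lambda>z::real\<times>real. (normal_density a \<sigma> (fst z) * (fst z - a) ^ i) *
        (normal_density (m (fst z)) \<tau> (snd z) * (snd z - m (fst z)) ^ j))"
  have meas: "F \<in> borel_measurable (lborel \<Otimes>\<^sub>M lborel)"
    unfolding F_def normal_density_def by measurable
  have inner_norm: "(\<integral>y. norm (F (x,y)) \<partial>lborel) = (normal_density a \<sigma> x * \<bar>x - a\<bar> ^ i) * amom \<tau> j" for x
  proof -
    have "(\<integral>y. norm (F (x,y)) \<partial>lborel) = (\<integral>y. (normal_density a \<sigma> x * \<bar>x - a\<bar> ^ i) *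
        (normal_density (m x) \<tau> y * \<bar>y - m x\<bar> ^ j) \<partial>lborel)"
      by (simp add: F_def abs_mult power_abs)
    also have "\<dots> = (normal_density a \<sigma> x * \<bar>x - a\<bar> ^ i) * amom \<tau> j"
      by (simp add: amom_shift)
    finally show ?thesis .
  qed
  have int1: "integrable lborel (\<lambda>x. \<integral>y. norm (F (x,y)) \<partial>lborel)"
    unfolding inner_norm
    by (intro integrable_mult_left integrable_normal_moment_abs \<sigma>)
  have int2: "AE x in lborel. integrable lborel (\<lambda>y. F (x,y))"
    unfolding F_def by (auto intro!: integrable_mult_right integrable_normal_moment \<tau>)
  have intP: "integrable (lborel \<Otimes>\<^sub>M lborel) F"
    by (rule lborel_pair.Fubini_integrable[OF meas int1 int2])
  then have intF: "integrable lborel F"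
    by (simp add: lborel_prod)
  have "integral\<^sup>L lborel F = integral\<^sup>L (lborel \<Otimes>\<^sub>M lborel) F"
    by (simp add: lborel_prod)
  also have "\<dots> = (\<integral>x. (\<integral>y. F (x, y) \<partial>lborel) \<partial>lborel)"
    by (rule lborel_pair.integral_fst'[OF intP, symmetric])
  also have "\<dots> = (\<integral>x. (normal_density a \<sigma> x * (x - a) ^ i) * mom \<tau> j \<partial>lborel)"
    by (simp add: F_def mom_shift)
  also have "\<dots> = mom \<sigma> i * mom \<tau> j"
    by (simp add: mom_shift)
  finally show ?thesis using intF
    by (simp add: F_def has_bochner_integral_iff)
qed



lemma bvn_factor:
  assumes s: "0 < s" and t: "0 < t" and r: "\<bar>\<rho>\<bar> < 1"
  shows "bvn_density (a,b,s,t,\<rho>) (x,y) =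
    normal_density a s x * normal_density (b + \<rho>*t/s*(x-a)) (t * sqrt(1-\<rho>\<^sup>2)) y"
proof -
  have r2: "0 < 1 - \<rho>\<^sup>2" using r by (simp add: abs_square_less_1)
  define k where "k = sqrt (1-\<rho>\<^sup>2)"
  have k: "0 < k" "k\<^sup>2 = 1 - \<rho>\<^sup>2" using r2 by (auto simp: k_def)
  have c1: "sqrt (2 * pi * s\<^sup>2) = sqrt (2*pi) * s" using s by (simp add: real_sqrt_mult)
  have c2: "sqrt (2 * pi * (t*k)\<^sup>2) = sqrt (2*pi) * (t*k)" using t k by (simp add: real_sqrt_mult)
  have c3: "sqrt (2*pi) * sqrt (2*pi) = 2 * pi" by simp
  have tk: "(t*k)\<^sup>2 = t\<^sup>2 * (1-\<rho>\<^sup>2)" using k by (simp add: power_mult_distrib)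
  have e: "-(x - a)\<^sup>2 / (2 * s\<^sup>2) + -(y - (b + \<rho>*t/s*(x-a)))\<^sup>2 / (2 * (t\<^sup>2 * (1-\<rho>\<^sup>2))) =
     - 1 / (2 * (1 - \<rho>\<^sup>2)) *
              ((x - a)\<^sup>2 / s\<^sup>2 - 2 * \<rho> * (x - a) * (y - b) / (s * t)
               + (y - b)\<^sup>2 / t\<^sup>2)"
    using s t r2
    by (simp add: field_simps power2_eq_square)
  have "normal_density a s x * normal_density (b + \<rho>*t/s*(x-a)) (t*k) y =
     1 / (2 * pi * s * t * k) * exp (-(x - a)\<^sup>2 / (2 * s\<^sup>2) + -(y - (b + \<rho>*t/s*(x-a)))\<^sup>2 / (2 * (t*k)\<^sup>2))"
    unfolding normal_density_def c1 c2 exp_add using s t k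
    by (simp add: field_simps c3)
  also have "\<dots> = bvn_density (a,b,s,t,\<rho>) (x,y)"
    unfolding tk e by (simp add: bvn_density_def muX_def muY_def sdX_def sdY_def corr_def Let_def k_def)
  finally show ?thesis by (simp add: k_def)
qed



lemma bvn_quad:
  assumes s: "0 < s" and t: "0 < t" and r: "\<bar>\<rho>\<bar> < 1"
  shows "has_bochner_integral lborel (\<lambda>z. bvn_density (a,b,s,t,\<rho>) z *
      (K + A*(fst z - mx)\<^sup>2 + B*(fst z - mx)*(snd z - my) + C*(snd z - my)\<^sup>2))
     (K + A*(s\<^sup>2 + (a-mx)\<^sup>2) + B*(\<rho> * s * t + (a-mx)*(b-my)) + C*(t\<^sup>2 + (b-my)\<^sup>2))"
proof -
  have r2: "0 < 1 - \<rho>\<^sup>2" using r by (simp add: abs_square_less_1)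
  define \<beta> where "\<beta> = \<rho>*t/s"
  define \<tau> where "\<tau> = t * sqrt (1-\<rho>\<^sup>2)"
  define mf where "mf = (\<lambda>x. b + \<beta>*(x-a))"
  define d1 where "d1 = a - mx"
  define d2 where "d2 = b - my"
  have \<tau>: "0 < \<tau>" using t r2 by (simp add: \<tau>_def)
  have \<tau>2: "\<tau>\<^sup>2 = t\<^sup>2 * (1-\<rho>\<^sup>2)" using r2 by (simp add: \<tau>_def power_mult_distrib)
  have mfm[measurable]: "mf \<in> borel_measurable borel" unfolding mf_def by measurable
  define M where "M = (\<lambda>i j (z::real\<times>real). (normal_density a s (fst z) * (fst z - a) ^ i) *
        (normal_density (mf (fst z)) \<tau> (snd z) * (snd z - mf (fst z)) ^ j))"
  have h: "has_bochner_integral lborel (M i j) (mom s i * mom \<tau> j)" for i j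
    unfolding M_def by (rule mono_hbi[OF mfm s \<tau>])
  define c00 where "c00 = K + A*d1\<^sup>2 + B*d1*d2 + C*d2\<^sup>2"
  define c10 where "c10 = 2*A*d1 + B*(\<beta>*d1 + d2) + 2*C*\<beta>*d2"
  define c01 where "c01 = B*d1 + 2*C*d2"
  define c20 where "c20 = A + B*\<beta> + C*\<beta>\<^sup>2"
  define c11 where "c11 = B + 2*C*\<beta>"
  define c02 where "c02 = C"
  have H: "has_bochner_integral lborel (\<lambda>z. c00 * M 0 0 z + c10 * M 1 0 z + c01 * M 0 1 z
       + c20 * M 2 0 z + c11 * M 1 1 z + c02 * M 0 2 z)
     (c00 * (mom s 0 * mom \<tau> 0) + c10 * (mom s 1 * mom \<tau> 0) + c01 * (mom s 0 * mom \<tau> 1)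
       + c20 * (mom s 2 * mom \<tau> 0) + c11 * (mom s 1 * mom \<tau> 1) + c02 * (mom s 0 * mom \<tau> 2))"
    by (intro has_bochner_integral_add has_bochner_integral_mult_right h)
  show ?thesis
  proof (rule has_bochner_integral_cong[THEN iffD1, OF refl _ _ H])
    fix z :: "real \<times> real"
    obtain x y where z: "z = (x,y)" by fastforce
    define N1 where "N1 = normal_density a s x"
    define N2 where "N2 = normal_density (mf x) \<tau> y"
    have f: "bvn_density (a,b,s,t,\<rho>) (x,y) = N1 * N2"
      unfolding N1_def N2_def mf_def \<beta>_def \<tau>_def by (rule bvn_factor[OF s t r])
    show "c00 * M 0 0 z + c10 * M 1 0 z + c01 * M 0 1 z
       + c20 * M 2 0 z + c11 * M 1 1 z + c02 * M 0 2 z = bvn_density (a,b,s,t,\<rho>) z *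
      (K + A*(fst z - mx)\<^sup>2 + B*(fst z - mx)*(snd z - my) + C*(snd z - my)\<^sup>2)"
      unfolding M_def z fst_conv snd_conv f snd_conv N1_def[symmetric] N2_def[symmetric]
      unfolding c00_def c10_def c01_def c20_def c11_def c02_def mf_def d1_def d2_def
      by (simp add: power2_eq_square algebra_simps)
  next
    show "c00 * (mom s 0 * mom \<tau> 0) + c10 * (mom s 1 * mom \<tau> 0) + c01 * (mom s 0 * mom \<tau> 1)
       + c20 * (mom s 2 * mom \<tau> 0) + c11 * (mom s 1 * mom \<tau> 1) + c02 * (mom s 0 * mom \<tau> 2)
      = K + A*(s\<^sup>2 + (a-mx)\<^sup>2) + B*(\<rho> * s * t + (a-mx)*(b-my)) + C*(t\<^sup>2 + (b-my)\<^sup>2)"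
      using s t \<tau> unfolding mom0[OF s] mom1[OF s] mom2[OF s] mom0[OF \<tau>] mom1[OF \<tau>] mom2[OF \<tau>] \<tau>2
      unfolding c00_def c10_def c01_def c20_def c11_def c02_def d1_def d2_def \<beta>_def
      by (simp add: field_simps power2_eq_square)
  qed
qed



lemma ln_bvn:
  assumes s: "0 < s" and t: "0 < t" and r: "\<bar>\<rho>\<bar> < 1"
  shows "ln (bvn_density (a,b,s,t,\<rho>) z) = - ln (2 * pi* s * t * sqrt(1-\<rho>\<^sup>2))
     + (-1/(2 * (1-\<rho>\<^sup>2)* s\<^sup>2)) * (fst z - a)\<^sup>2 + (\<rho>/((1-\<rho>\<^sup>2)* s * t)) * (fst z - a) * (snd z - b)
     + (-1/(2 * (1-\<rho>\<^sup>2) * t\<^sup>2)) * (snd z - b)\<^sup>2"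
proof -
  have r2: "0 < 1 - \<rho>\<^sup>2" using r by (simp add: abs_square_less_1)
  have c: "0 < 2 * pi* s * t * sqrt(1-\<rho>\<^sup>2)" using s t r2 by simp
  have L: "ln (bvn_density (a,b,s,t,\<rho>) z) = ln (1 / (2 * pi* s * t * sqrt(1-\<rho>\<^sup>2))) +
     (- 1 / (2 * (1 - \<rho>\<^sup>2)) *
              ((fst z - a)\<^sup>2 / s\<^sup>2 - 2 * \<rho> * (fst z - a) * (snd z - b) / (s * t)
               + (snd z - b)\<^sup>2 / t\<^sup>2))"
    unfolding bvn_density_def Let_def muX_def muY_def sdX_def sdY_def corr_def fst_conv snd_conv
    using c s t r2 by (subst ln_mult) (auto simp: mult.assoc)
  have l1: "ln (1 / (2 * pi* s * t * sqrt(1-\<rho>\<^sup>2))) = - ln (2 * pi* s * t * sqrt(1-\<rho>\<^sup>2))"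
    using c s t r2 by (simp add: ln_div)
  have E0: "(- 1 / (2 * d) * (u\<^sup>2 / s\<^sup>2 - 2 * \<rho> * u * v / (s * t) + v\<^sup>2 / t\<^sup>2))
     = (-1/(2 * d * s\<^sup>2)) * u\<^sup>2 + (\<rho>/(d * s * t)) * u * v + (-1/(2 * d * t\<^sup>2)) * v\<^sup>2"
    if "d \<noteq> 0" for u v d
    using s t that by (simp add: field_simps power2_eq_square)
  have r2': "1 - \<rho>\<^sup>2 \<noteq> 0" using r2 by simp
  show ?thesis
    unfolding L l1 E0[OF r2'] by simp
qed



lemma KL_raw:
  assumes s: "0 < s" and t: "0 < t" and r: "\<bar>\<rho>\<bar> < 1"
    and s1: "0 < \<sigma>1" and s2: "0 < \<sigma>2" and rp: "\<bar>r\<bar> < 1"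
  shows "rel_entropy (a,b,s,t,\<rho>) (m1,m2,\<sigma>1,\<sigma>2,r) =
    (- ln (2 * pi * s * t * sqrt (1-\<rho>\<^sup>2)) - 1)
    - (- ln (2 * pi * \<sigma>1 * \<sigma>2 * sqrt (1-r\<^sup>2))
       + (-1/(2 * (1-r\<^sup>2) * \<sigma>1\<^sup>2)) * (s\<^sup>2 + (a-m1)\<^sup>2)
       + (r/((1-r\<^sup>2) * \<sigma>1 * \<sigma>2)) * (\<rho> * s * t + (a-m1) * (b-m2))
       + (-1/(2 * (1-r\<^sup>2) * \<sigma>2\<^sup>2)) * (t\<^sup>2 + (b-m2)\<^sup>2))"
proof -
  have "\<rho>\<^sup>2 < 1" using r by (simp add: abs_square_less_1)
  then have r2: "1 - \<rho>\<^sup>2 \<noteq> 0" by simp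
  note h1 = bvn_quad[OF s t r, where K="- ln (2 * pi * s * t * sqrt (1-\<rho>\<^sup>2))"
     and A="-1/(2 * (1-\<rho>\<^sup>2) * s\<^sup>2)" and B="\<rho>/((1-\<rho>\<^sup>2) * s * t)"
     and C="-1/(2 * (1-\<rho>\<^sup>2) * t\<^sup>2)" and mx=a and my=b and a=a and b=b]
  note h2 = bvn_quad[OF s t r, where K="- ln (2 * pi * \<sigma>1 * \<sigma>2 * sqrt (1-r\<^sup>2))"
     and A="-1/(2 * (1-r\<^sup>2) * \<sigma>1\<^sup>2)" and B="r/((1-r\<^sup>2) * \<sigma>1 * \<sigma>2)"
     and C="-1/(2 * (1-r\<^sup>2) * \<sigma>2\<^sup>2)" and mx=m1 and my=m2 and a=a and b=b]
  note hd = has_bochner_integral_diff[OF h1 h2]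
  have v1: "- ln (2 * pi * s * t * sqrt (1-\<rho>\<^sup>2)) + (-1/(2 * (1-\<rho>\<^sup>2) * s\<^sup>2)) * (s\<^sup>2 + (a-a)\<^sup>2)
     + (\<rho>/((1-\<rho>\<^sup>2) * s * t)) * (\<rho> * s * t + (a-a) * (b-b))
     + (-1/(2 * (1-\<rho>\<^sup>2) * t\<^sup>2)) * (t\<^sup>2 + (b-b)\<^sup>2) = - ln (2 * pi * s * t * sqrt (1-\<rho>\<^sup>2)) - 1"
  proof -
    have w: "(-1/(2 * d * s\<^sup>2)) * (s\<^sup>2 + (a-a)\<^sup>2) + (\<rho>/(d * s * t)) * (\<rho> * s * t + (a-a) * (b-b))
     + (-1/(2 * d * t\<^sup>2)) * (t\<^sup>2 + (b-b)\<^sup>2) = -1" if "d \<noteq> 0" "\<rho>\<^sup>2 = 1 - d" for d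
    proof -
      have "(-1/(2 * d * s\<^sup>2)) * (s\<^sup>2 + (a-a)\<^sup>2) + (\<rho>/(d * s * t)) * (\<rho> * s * t + (a-a) * (b-b))
       + (-1/(2 * d * t\<^sup>2)) * (t\<^sup>2 + (b-b)\<^sup>2) = (\<rho>\<^sup>2 - 1) / d"
        using s t that(1) by (simp add: field_simps power2_eq_square)
      then show ?thesis using that by simp
    qed
    show ?thesis using w[OF r2] by simp
  qed
  have "has_bochner_integral lborel
     (\<lambda>z. bvn_density (a,b,s,t,\<rho>) z * (ln (bvn_density (a,b,s,t,\<rho>) z) - ln (bvn_density (m1,m2,\<sigma>1,\<sigma>2,r) z)))
     ((- ln (2 * pi * s * t * sqrt (1-\<rho>\<^sup>2)) - 1)
    - (- ln (2 * pi * \<sigma>1 * \<sigma>2 * sqrt (1-r\<^sup>2))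
       + (-1/(2 * (1-r\<^sup>2) * \<sigma>1\<^sup>2)) * (s\<^sup>2 + (a-m1)\<^sup>2)
       + (r/((1-r\<^sup>2) * \<sigma>1 * \<sigma>2)) * (\<rho> * s * t + (a-m1) * (b-m2))
       + (-1/(2 * (1-r\<^sup>2) * \<sigma>2\<^sup>2)) * (t\<^sup>2 + (b-m2)\<^sup>2)))"
    apply (rule has_bochner_integral_cong[THEN iffD1, OF refl _ _ hd])
    subgoal for z
      by (simp only: ln_bvn[OF s t r] ln_bvn[OF s1 s2 rp] right_diff_distrib[of "bvn_density (a,b,s,t,\<rho>) z"])
    subgoal unfolding v1 ..
    done
  then show ?thesis unfolding rel_entropy_def
    by (rule has_bochner_integral_integral_eq)
qed



definition ef :: "real \<Rightarrow> real" where "ef z = (z - 1 - ln z) / 2"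

lemma ef_nonneg: "0 < z \<Longrightarrow> 0 \<le> ef z"
  unfolding ef_def using ln_le_minus_one[of z] by simp

lemma ef_zero: "0 < z \<Longrightarrow> ef z \<le> 0 \<Longrightarrow> z = 1"
  unfolding ef_def using ln_le_minus_one[of z] ln_eq_minus_one[of z] by simp

lemma ef_one: "ef 1 = 0" unfolding ef_def by simp

lemma ef_dec: "0 < z \<Longrightarrow> z < z' \<Longrightarrow> z' \<le> 1 \<Longrightarrow> ef z' < ef z"
proof -
  assume a: "0 < z" "z < z'" "z' \<le> 1"
  have "ln z - ln z' < (z - z') / z'" using a by (intro ln_diff_less) auto
  moreover have "(z - z') / z' \<le> z - z'"
  proof -
    have "1 \<le> 1 / z'" using a by simp
    then have "(z - z') * (1 / z') \<le> (z - z') * 1" using a by (intro mult_left_mono_neg) auto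
    then show ?thesis by simp
  qed
  ultimately show ?thesis unfolding ef_def by simp
qed

lemma ef_inc: "1 \<le> z' \<Longrightarrow> z' < z \<Longrightarrow> ef z' < ef z"
proof -
  assume a: "1 \<le> z'" "z' < z"
  have "ln z - ln z' < (z - z') / z'" using a by (intro ln_diff_less) auto
  moreover have "(z - z') / z' \<le> z - z'"
    using a by (simp add: divide_le_eq mult_le_cancel_left1 mult.commute)
  ultimately show ?thesis unfolding ef_def by simp
qed



lemma step1:
  fixes D s t \<sigma>1 \<sigma>2 r \<rho> d1 d2 L0 ls lt l1 l2 :: real
  assumes "D \<noteq> 0" "s > 0" "t > 0" "\<sigma>1 > 0" "\<sigma>2 > 0"
  shows "(-(L0 + ls + lt) - 1) - (-(L0 + l1 + l2) + (-1/(2 * D * \<sigma>1\<^sup>2)) * (s\<^sup>2 + d1\<^sup>2)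
     + (r/(D * \<sigma>1 * \<sigma>2)) * (\<rho> * s * t + d1 * d2) + (-1/(2 * D * \<sigma>2\<^sup>2)) * (t\<^sup>2 + d2\<^sup>2))
   = (l1 + l2 - ls - lt - 1) + ((d1/\<sigma>1)\<^sup>2 - 2 * r * (d1/\<sigma>1) * (d2/\<sigma>2) + (d2/\<sigma>2)\<^sup>2)/(2 * D)
     + ((s/\<sigma>1)\<^sup>2 - 2 * r * (s/\<sigma>1) * (\<rho> * (t/\<sigma>2)) + (t/\<sigma>2)\<^sup>2)/(2 * D)"
  using assms by (simp add: field_simps power2_eq_square)

lemma mean_id:
  fixes D r X Y :: real
  assumes "D \<noteq> 0" "r\<^sup>2 + D = 1"
  shows "(X\<^sup>2 - 2 * r * X * Y + Y\<^sup>2)/(2 * D) = ((X - r * Y)\<^sup>2 + D * Y\<^sup>2)/(2 * D)"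
proof -
  have "(X - r * Y)\<^sup>2 + D * Y\<^sup>2 = X\<^sup>2 - 2 * r * X * Y + (r\<^sup>2 + D) * Y\<^sup>2"
    by (simp add: power2_eq_square algebra_simps)
  then show ?thesis using assms by simp
qed

lemma cov_id:
  fixes D r U W \<rho> :: real
  assumes "D \<noteq> 0" "r\<^sup>2 + D = 1"
  shows "(U\<^sup>2 - 2 * r * U * (\<rho> * W) + W\<^sup>2)/(2 * D) = (\<rho> * W - r * U)\<^sup>2/(2 * D) + U\<^sup>2/2 + W\<^sup>2 * (1-\<rho>\<^sup>2)/(2 * D)"
proof -
  have "(\<rho> * W - r * U)\<^sup>2 + D * U\<^sup>2 + W\<^sup>2 * (1-\<rho>\<^sup>2) = (r\<^sup>2 + D) * U\<^sup>2 - 2 * r * U * (\<rho> * W) + W\<^sup>2"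
    by (simp add: power2_eq_square algebra_simps)
  then have "U\<^sup>2 - 2 * r * U * (\<rho> * W) + W\<^sup>2 = (\<rho> * W - r * U)\<^sup>2 + D * U\<^sup>2 + W\<^sup>2 * (1-\<rho>\<^sup>2)"
    using assms by simp
  moreover have "(\<rho> * W - r * U)\<^sup>2/(2 * D) + U\<^sup>2/2 + W\<^sup>2 * (1-\<rho>\<^sup>2)/(2 * D)
     = ((\<rho> * W - r * U)\<^sup>2 + D * U\<^sup>2 + W\<^sup>2 * (1-\<rho>\<^sup>2))/(2 * D)"
    using assms(1) by (simp add: add_divide_distrib)
  ultimately show ?thesis by simp
qed

lemma fin_id:
  fixes D l1 l2 ls lt M C U2 Z2 :: real
  assumes "D \<noteq> 0"
  shows "(l1 + l2 - ls - lt - 1) + M + (C + U2/2 + Z2/(2 * D))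
    = M + C + (U2 - 1 - (2 * ls - 2 * l1))/2 + (Z2/D - 1 - (2 * lt - 2 * l2))/2"
  using assms by (simp add: field_simps)

lemma KL_nice:
  assumes s: "0 < s" and t: "0 < t" and r: "\<bar>\<rho>\<bar> < 1"
    and s1: "0 < \<sigma>1" and s2: "0 < \<sigma>2" and rp: "\<bar>r\<bar> < 1"
  shows "rel_entropy (a,b,s,t,\<rho>) (m1,m2,\<sigma>1,\<sigma>2,r) =
    (((a-m1)/\<sigma>1 - r * ((b-m2)/\<sigma>2))\<^sup>2 + (1-r\<^sup>2) * ((b-m2)/\<sigma>2)\<^sup>2)/(2 * (1-r\<^sup>2))
    + (\<rho> * (t/\<sigma>2) - r * (s/\<sigma>1))\<^sup>2/(2 * (1-r\<^sup>2))
    + ef ((s/\<sigma>1)\<^sup>2) + ef ((t/\<sigma>2)\<^sup>2 * (1-\<rho>\<^sup>2)/(1-r\<^sup>2))"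
proof -
  have "\<rho>\<^sup>2 < 1" using r by (simp add: abs_square_less_1)
  then have E: "0 < 1 - \<rho>\<^sup>2" by simp
  have "r\<^sup>2 < 1" using rp by (simp add: abs_square_less_1)
  then have D: "0 < 1 - r\<^sup>2" by simp
  have D': "1 - r\<^sup>2 \<noteq> 0" "r\<^sup>2 + (1 - r\<^sup>2) = 1" using D by auto
  have lq: "ln (2 * pi * s * t * sqrt (1-\<rho>\<^sup>2)) = ln (2 * pi) + ln s + ln (t * sqrt (1-\<rho>\<^sup>2))"
    using s t E by (simp add: ln_mult)
  have lp: "ln (2 * pi * \<sigma>1 * \<sigma>2 * sqrt (1-r\<^sup>2)) = ln (2 * pi) + ln \<sigma>1 + ln (\<sigma>2 * sqrt (1-r\<^sup>2))"
    using s1 s2 D by (simp add: ln_mult)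
  have lU: "ln ((s/\<sigma>1)\<^sup>2) = 2 * ln s - 2 * ln \<sigma>1"
    using s s1 by (simp add: ln_realpow ln_div)
  have zz: "(t/\<sigma>2)\<^sup>2 * (1-\<rho>\<^sup>2)/(1-r\<^sup>2) = (t * sqrt (1-\<rho>\<^sup>2) / (\<sigma>2 * sqrt (1-r\<^sup>2)))\<^sup>2"
    using E D by (simp add: power_mult_distrib power_divide)
  have lZ: "ln ((t/\<sigma>2)\<^sup>2 * (1-\<rho>\<^sup>2)/(1-r\<^sup>2)) = 2 * ln (t * sqrt (1-\<rho>\<^sup>2)) - 2 * ln (\<sigma>2 * sqrt (1-r\<^sup>2))"
    unfolding zz using t s2 E D by (simp add: ln_realpow ln_div)
  show ?thesis
    unfolding KL_raw[OF s t r s1 s2 rp] lq lp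
    unfolding step1[OF D'(1) s t s1 s2] mean_id[OF D'] cov_id[OF D']
    unfolding ef_def lU lZ
    by (rule fin_id[OF D'(1)])
qed



context
  fixes mX mY sX sY r :: real
  assumes sX: "0 < sX" and sY: "0 < sY" and rp: "\<bar>r\<bar> < 1"
begin

definition tstar :: "real \<Rightarrow> real" where
  "tstar s = sY * sqrt (1 - r\<^sup>2 + r\<^sup>2 * s\<^sup>2 / sX\<^sup>2)"

definition qstar :: "real \<Rightarrow> bvn" where
  "qstar s = (mX, mY, s, tstar s, r * (s / sX) * sY / tstar s)"

lemma r2: "0 < 1 - r\<^sup>2"
  using rp by (simp add: abs_square_less_1)

lemma KL_lower:
  assumes "bvn_valid q"
  shows "ef ((sdX q / sX)\<^sup>2) \<le> rel_entropy q (mX, mY, sX, sY, r)"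
proof -
  obtain a b s t \<rho> where q: "q = (a,b,s,t,\<rho>)" using prod_cases5 by blast
  have s: "0 < s" and t: "0 < t" and rr: "\<bar>\<rho>\<bar> < 1"
    using assms by (auto simp: q bvn_valid_def sdX_def sdY_def corr_def)
  have E: "0 < 1 - \<rho>\<^sup>2" using rr by (simp add: abs_square_less_1)
  have "0 \<le> (((a-mX)/sX - r * ((b-mY)/sY))\<^sup>2 + (1-r\<^sup>2) * ((b-mY)/sY)\<^sup>2)/(2 * (1-r\<^sup>2))"
    using r2 by (intro divide_nonneg_pos add_nonneg_nonneg mult_nonneg_nonneg) auto
  moreover have "0 \<le> (\<rho> * (t/sY) - r * (s/sX))\<^sup>2/(2 * (1-r\<^sup>2))"
    using r2 by auto
  moreover have "0 \<le> ef ((t/sY)\<^sup>2 * (1-\<rho>\<^sup>2)/(1-r\<^sup>2))"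
    using r2 E t sY by (intro ef_nonneg) simp
  ultimately show ?thesis
    unfolding q KL_nice[OF s t rr sX sY rp] by (simp add: sdX_def)
qed

lemma KL_shape:
  assumes "bvn_valid q" and "rel_entropy q (mX, mY, sX, sY, r) \<le> ef ((sdX q / sX)\<^sup>2)"
  shows "muY q = mY \<and> sdY q = tstar (sdX q)"
proof -
  obtain a b s t \<rho> where q: "q = (a,b,s,t,\<rho>)" using prod_cases5 by blast
  have s: "0 < s" and t: "0 < t" and rr: "\<bar>\<rho>\<bar> < 1"
    using assms by (auto simp: q bvn_valid_def sdX_def sdY_def corr_def)
  have E: "0 < 1 - \<rho>\<^sup>2" using rr by (simp add: abs_square_less_1)
  define Mn where "Mn = (((a-mX)/sX - r * ((b-mY)/sY))\<^sup>2 + (1-r\<^sup>2) * ((b-mY)/sY)\<^sup>2)/(2 * (1-r\<^sup>2))"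
  define Cv where "Cv = (\<rho> * (t/sY) - r * (s/sX))\<^sup>2/(2 * (1-r\<^sup>2))"
  define Z where "Z = (t/sY)\<^sup>2 * (1-\<rho>\<^sup>2)/(1-r\<^sup>2)"
  have Mn: "0 \<le> Mn" unfolding Mn_def
    using r2 by (intro divide_nonneg_pos add_nonneg_nonneg mult_nonneg_nonneg) auto
  have Cv: "0 \<le> Cv" unfolding Cv_def using r2 by auto
  have Zp: "0 < Z" unfolding Z_def using r2 E t sY by simp
  have eZ: "0 \<le> ef Z" using Zp by (rule ef_nonneg)
  have "Mn + Cv + ef Z \<le> 0"
    using assms(2) unfolding q KL_nice[OF s t rr sX sY rp] Mn_def[symmetric] Cv_def[symmetric] Z_def[symmetric]
    by (simp add: sdX_def)
  then have M0: "Mn = 0" and C0: "Cv = 0" and Z0: "ef Z \<le> 0" using Mn Cv eZ by linarith+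
  have Z1: "Z = 1" using ef_zero[OF Zp Z0] .
  have "((a-mX)/sX - r * ((b-mY)/sY))\<^sup>2 + (1-r\<^sup>2) * ((b-mY)/sY)\<^sup>2 = 0"
    using M0 r2 unfolding Mn_def by simp
  then have "(1-r\<^sup>2) * ((b-mY)/sY)\<^sup>2 = 0"
    using r2 by (smt (verit) mult_nonneg_nonneg zero_le_power2)
  then have b: "b = mY" using r2 sY by simp
  have V: "\<rho> * (t/sY) = r * (s/sX)" using C0 r2 unfolding Cv_def by simp
  have Zt: "(t/sY)\<^sup>2 * (1-\<rho>\<^sup>2) = 1 - r\<^sup>2" using Z1 r2 unfolding Z_def by simp
  have gen: "w\<^sup>2 = w\<^sup>2 * (1-\<rho>\<^sup>2) + (\<rho> * w)\<^sup>2" for w :: real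
    by (simp add: power2_eq_square algebra_simps)
  have "(t/sY)\<^sup>2 = (t/sY)\<^sup>2 * (1-\<rho>\<^sup>2) + (\<rho> * (t/sY))\<^sup>2"
    by (rule gen)
  also have "\<dots> = 1 - r\<^sup>2 + r\<^sup>2 * s\<^sup>2 / sX\<^sup>2"
    unfolding Zt V by (simp add: power_mult_distrib power_divide)
  finally have tt: "t\<^sup>2 = sY\<^sup>2 * (1 - r\<^sup>2 + r\<^sup>2 * s\<^sup>2 / sX\<^sup>2)"
    using sY by (simp add: power_divide field_simps)
  have "t = sqrt (t\<^sup>2)" using t by simp
  also have "\<dots> = tstar s" unfolding tt tstar_def using sY by (simp add: real_sqrt_mult)
  finally show ?thesis using b by (simp add: q muY_def sdY_def sdX_def)
qed

lemma tstar_pos: "0 < tstar s"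
proof -
  have "0 < 1 - r\<^sup>2 + r\<^sup>2 * s\<^sup>2 / sX\<^sup>2" using r2 by (simp add: add_pos_nonneg)
  then show ?thesis unfolding tstar_def using sY by simp
qed

lemma qstar_props:
  assumes s: "0 < s"
  shows "bvn_valid (qstar s)" "sdX (qstar s) = s" "muY (qstar s) = mY" "sdY (qstar s) = tstar s"
    "rel_entropy (qstar s) (mX, mY, sX, sY, r) = ef ((s / sX)\<^sup>2)"
proof -
  define T where "T = tstar s"
  define \<rho> where "\<rho> = r * (s / sX) * sY / T"
  have T: "0 < T" unfolding T_def by (rule tstar_pos)
  have K: "0 < 1 - r\<^sup>2 + r\<^sup>2 * s\<^sup>2 / sX\<^sup>2" using r2 by (simp add: add_pos_nonneg)
  have T2: "(T/sY)\<^sup>2 = 1 - r\<^sup>2 + r\<^sup>2 * s\<^sup>2 / sX\<^sup>2"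
    unfolding T_def tstar_def using sY K by (simp add: power_mult_distrib)
  have V: "\<rho> * (T/sY) = r * (s/sX)" unfolding \<rho>_def using T sY by simp
  have "\<rho>\<^sup>2 * (T/sY)\<^sup>2 = (\<rho> * (T/sY))\<^sup>2" by (simp only: power_mult_distrib)
  also have "\<dots> = (r * (s/sX))\<^sup>2" by (simp only: V)
  also have "\<dots> = r\<^sup>2 * s\<^sup>2 / sX\<^sup>2" by (simp add: power_mult_distrib power_divide)
  finally have rho2: "\<rho>\<^sup>2 * (1 - r\<^sup>2 + r\<^sup>2 * s\<^sup>2 / sX\<^sup>2) = r\<^sup>2 * s\<^sup>2 / sX\<^sup>2"
    by (simp only: T2)
  have "\<rho>\<^sup>2 < 1"
  proof (rule ccontr)
    assume "\<not> \<rho>\<^sup>2 < 1"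
    then have "1 * (1 - r\<^sup>2 + r\<^sup>2 * s\<^sup>2 / sX\<^sup>2) \<le> \<rho>\<^sup>2 * (1 - r\<^sup>2 + r\<^sup>2 * s\<^sup>2 / sX\<^sup>2)"
      using K by (intro mult_right_mono) auto
    then show False using rho2 r2 by simp
  qed
  then have rr: "\<bar>\<rho>\<bar> < 1" by (simp add: abs_square_less_1)
  have q: "qstar s = (mX, mY, s, T, \<rho>)" unfolding qstar_def T_def \<rho>_def ..
  show "bvn_valid (qstar s)" unfolding q bvn_valid_def sdX_def sdY_def corr_def using s T rr by simp
  show "sdX (qstar s) = s" "muY (qstar s) = mY" "sdY (qstar s) = tstar s"
    unfolding q sdX_def muY_def sdY_def T_def by simp_all
  have Z: "(T/sY)\<^sup>2 * (1-\<rho>\<^sup>2)/(1-r\<^sup>2) = 1"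
  proof -
    have gen: "w\<^sup>2 * (1-\<rho>\<^sup>2) = w\<^sup>2 - (\<rho> * w)\<^sup>2" for w :: real
      by (simp add: power2_eq_square algebra_simps)
    have "(T/sY)\<^sup>2 * (1-\<rho>\<^sup>2) = (T/sY)\<^sup>2 - (\<rho> * (T/sY))\<^sup>2" by (rule gen)
    also have "\<dots> = (1 - r\<^sup>2 + r\<^sup>2 * s\<^sup>2 / sX\<^sup>2) - (r * (s/sX))\<^sup>2" by (simp only: T2 V)
    also have "\<dots> = 1 - r\<^sup>2" by (simp add: power_mult_distrib power_divide)
    finally show ?thesis using r2 by simp
  qed
  show "rel_entropy (qstar s) (mX, mY, sX, sY, r) = ef ((s / sX)\<^sup>2)"
    unfolding q KL_nice[OF s T rr sX sY rp] Z V by (simp add: ef_one)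
qed

end



lemma ef_dec_le: "0 < z \<Longrightarrow> z \<le> z' \<Longrightarrow> z' \<le> 1 \<Longrightarrow> ef z' \<le> ef z"
  using ef_dec[of z z'] by (cases "z = z'") auto
lemma ef_dec_eq: "0 < z \<Longrightarrow> z \<le> z' \<Longrightarrow> z' \<le> 1 \<Longrightarrow> ef z \<le> ef z' \<Longrightarrow> z = z'"
  using ef_dec[of z z'] by (cases "z = z'") auto
lemma ef_inc_le: "1 \<le> z' \<Longrightarrow> z' \<le> z \<Longrightarrow> ef z' \<le> ef z"
  using ef_inc[of z' z] by (cases "z = z'") auto
lemma ef_inc_eq: "1 \<le> z' \<Longrightarrow> z' \<le> z \<Longrightarrow> ef z \<le> ef z' \<Longrightarrow> z = z'"
  using ef_inc[of z' z] by (cases "z = z'") auto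

lemma sq_eq_pos: "0 < (x::real) \<Longrightarrow> 0 < y \<Longrightarrow> x\<^sup>2 = y\<^sup>2 \<Longrightarrow> x = y"
  by (simp add: power2_eq_iff_nonneg)

theorem theorem3p2:
  fixes mX mY sX sY r s1 \<alpha> :: real
  assumes "sX > 0" and "sY > 0" and "\<bar>r\<bar> < 1" and "s1 > 0"
    and "0 < \<alpha>" and "\<alpha> < 1"
  defines "prior \<equiv> (mX, mY, sX, sY, r)"
    and "c_eq \<equiv> mY + sY * sqrt (1 - r\<^sup>2 + r\<^sup>2 * s1\<^sup>2 / sX\<^sup>2) * Phi_inv \<alpha>"
  shows "CoVaR_is \<alpha> prior (\<lambda>q. (sdX q)\<^sup>2 = s1\<^sup>2) c_eq
    \<and> (sX\<^sup>2 \<le> s1\<^sup>2 \<longrightarrow> CoVaR_is \<alpha> prior (\<lambda>q. (sdX q)\<^sup>2 \<le> s1\<^sup>2) (VaR \<alpha> prior))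
    \<and> (sX\<^sup>2 > s1\<^sup>2 \<longrightarrow> CoVaR_is \<alpha> prior (\<lambda>q. (sdX q)\<^sup>2 \<le> s1\<^sup>2) c_eq)
    \<and> (sX\<^sup>2 \<ge> s1\<^sup>2 \<longrightarrow> CoVaR_is \<alpha> prior (\<lambda>q. (sdX q)\<^sup>2 \<ge> s1\<^sup>2) (VaR \<alpha> prior))
    \<and> (sX\<^sup>2 < s1\<^sup>2 \<longrightarrow> CoVaR_is \<alpha> prior (\<lambda>q. (sdX q)\<^sup>2 \<ge> s1\<^sup>2) c_eq)"
proof -
  note sX = assms(1) and sY = assms(2) and rp = assms(3) and s1 = assms(4)
  note lower = KL_lower[OF sX sY rp, of _ mX mY, folded prior_def]
  note shape = KL_shape[OF sX sY rp, of _ mX mY, folded prior_def]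
  note qs = qstar_props[OF sX sY rp, of _ mX mY, folded prior_def]
  have gen: "CoVaR_is \<alpha> prior V (mY + tstar sX sY r s0 * Phi_inv \<alpha>)"
    if s0: "0 < s0" and V0: "V (qstar mX mY sX sY r s0)"
      and lo: "\<And>q. bvn_valid q \<Longrightarrow> V q \<Longrightarrow> ef ((s0/sX)\<^sup>2) \<le> rel_entropy q prior"
      and sd: "\<And>q. bvn_valid q \<Longrightarrow> V q \<Longrightarrow> rel_entropy q prior \<le> ef ((s0/sX)\<^sup>2) \<Longrightarrow> sdX q = s0"
    for V s0
  proof -
    have post: "is_posterior prior V (qstar mX mY sX sY r s0)"
      unfolding is_posterior_def
    proof (intro conjI allI impI)
      show "bvn_valid (qstar mX mY sX sY r s0)" using qs[OF s0] by blast
      show "V (qstar mX mY sX sY r s0)" by (rule V0)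
      fix q' assume "bvn_valid q' \<and> V q'"
      then have "ef ((s0/sX)\<^sup>2) \<le> rel_entropy q' prior" using lo by blast
      moreover have "rel_entropy (qstar mX mY sX sY r s0) prior = ef ((s0/sX)\<^sup>2)" using qs[OF s0] by blast
      ultimately show "rel_entropy (qstar mX mY sX sY r s0) prior \<le> rel_entropy q' prior" by simp
    qed
    show ?thesis unfolding CoVaR_is_def
    proof (intro conjI exI allI impI)
      show "is_posterior prior V (qstar mX mY sX sY r s0)" by (rule post)
    next
      fix q assume "is_posterior prior V q"
      then have v: "bvn_valid q" "V q" and mn: "\<forall>q'. bvn_valid q' \<and> V q' \<longrightarrow> rel_entropy q prior \<le> rel_entropy q' prior"
        unfolding is_posterior_def by blast+
      have "bvn_valid (qstar mX mY sX sY r s0) \<and> V (qstar mX mY sX sY r s0)"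
        using post unfolding is_posterior_def by blast
      then have le: "rel_entropy q prior \<le> rel_entropy (qstar mX mY sX sY r s0) prior"
        using mn by blast
      then have le': "rel_entropy q prior \<le> ef ((s0/sX)\<^sup>2)" using qs[OF s0] by simp
      have "sdX q = s0" using sd[OF v le'] .
      then have "muY q = mY \<and> sdY q = tstar sX sY r s0" using shape[OF v(1)] le' by simp
      then show "muY q + sdY q * Phi_inv \<alpha> = mY + tstar sX sY r s0 * Phi_inv \<alpha>" by simp
    qed
  qed
  have sdpos: "bvn_valid q \<Longrightarrow> 0 < sdX q" for q by (simp add: bvn_valid_def)
  have sqd: "(s/sX)\<^sup>2 = s\<^sup>2/sX\<^sup>2" for s by (simp add: power_divide)
  have ceq: "c_eq = mY + tstar sX sY r s1 * Phi_inv \<alpha>" by (simp add: c_eq_def tstar_def[OF sX sY rp])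
  have var: "VaR \<alpha> prior = mY + tstar sX sY r sX * Phi_inv \<alpha>"
    unfolding VaR_def tstar_def[OF sX sY rp] prior_def using sX by (simp add: muY_def sdY_def)
  have qsX: "sdX (qstar mX mY sX sY r s) = s" if "0 < s" for s using qs[OF that] by simp
  have zle: "(a/sX)\<^sup>2 \<le> (b/sX)\<^sup>2" if "a\<^sup>2 \<le> b\<^sup>2" for a b
    unfolding sqd using that sX by (simp add: divide_right_mono)
  have zeq: "a = b" if "(a/sX)\<^sup>2 = (b/sX)\<^sup>2" "0 < a" "0 < b" for a b
  proof -
    have "a\<^sup>2 / sX\<^sup>2 = b\<^sup>2 / sX\<^sup>2" using that(1) by (simp only: sqd)
    then have "a\<^sup>2 = b\<^sup>2" using sX by (simp add: divide_cancel_right)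
    then show ?thesis using that(2,3) by (rule sq_eq_pos[rotated 2])
  qed
  have zpos: "0 < (a/sX)\<^sup>2" if "0 < a" for a using that sX by simp
  have one: "(sX/sX)\<^sup>2 = 1" using sX by simp
  have P1: "CoVaR_is \<alpha> prior (\<lambda>q. (sdX q)\<^sup>2 = s1\<^sup>2) c_eq"
    unfolding ceq
  proof (rule gen[OF s1])
    show "(sdX (qstar mX mY sX sY r s1))\<^sup>2 = s1\<^sup>2" using qsX[OF s1] by simp
  next
    fix q assume v: "bvn_valid q" and V: "(sdX q)\<^sup>2 = s1\<^sup>2"
    have e: "sdX q = s1" using sq_eq_pos[OF sdpos[OF v] s1 V] .
    show "ef ((s1/sX)\<^sup>2) \<le> rel_entropy q prior" using lower[OF v] e by simp
  next
    fix q assume v: "bvn_valid q" and V: "(sdX q)\<^sup>2 = s1\<^sup>2"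
    show "sdX q = s1" using sq_eq_pos[OF sdpos[OF v] s1 V] .
  qed
  have Pvar: "CoVaR_is \<alpha> prior V (VaR \<alpha> prior)"
    if V0: "V (qstar mX mY sX sY r sX)" for V
    unfolding var
  proof (rule gen[where V=V, OF sX V0])
    fix q assume v: "bvn_valid q"
    show "ef ((sX/sX)\<^sup>2) \<le> rel_entropy q prior"
      using lower[OF v] ef_nonneg[OF zpos[OF sdpos[OF v]]] one ef_one by simp
  next
    fix q assume v: "bvn_valid q" and le: "rel_entropy q prior \<le> ef ((sX/sX)\<^sup>2)"
    have "ef ((sdX q/sX)\<^sup>2) \<le> 0" using lower[OF v] le one ef_one by simp
    then have "(sdX q/sX)\<^sup>2 = 1" using ef_zero[OF zpos[OF sdpos[OF v]]] by simp
    then show "sdX q = sX" using zeq[OF _ sdpos[OF v] sX] one by simp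
  qed
  have P2: "CoVaR_is \<alpha> prior (\<lambda>q. (sdX q)\<^sup>2 \<le> s1\<^sup>2) (VaR \<alpha> prior)" if "sX\<^sup>2 \<le> s1\<^sup>2"
    using that qsX[OF sX] by (intro Pvar) simp
  have P4: "CoVaR_is \<alpha> prior (\<lambda>q. (sdX q)\<^sup>2 \<ge> s1\<^sup>2) (VaR \<alpha> prior)" if "sX\<^sup>2 \<ge> s1\<^sup>2"
    using that qsX[OF sX] by (intro Pvar) simp
  have P3: "CoVaR_is \<alpha> prior (\<lambda>q. (sdX q)\<^sup>2 \<le> s1\<^sup>2) c_eq" if lt: "sX\<^sup>2 > s1\<^sup>2"
    unfolding ceq
  proof (rule gen[OF s1])
    show "(sdX (qstar mX mY sX sY r s1))\<^sup>2 \<le> s1\<^sup>2" using qsX[OF s1] by simp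
  next
    have z1: "(s1/sX)\<^sup>2 \<le> 1" using zle[of s1 sX] lt one by simp
    {
      fix q assume v: "bvn_valid q" and V: "(sdX q)\<^sup>2 \<le> s1\<^sup>2"
      have "ef ((s1/sX)\<^sup>2) \<le> ef ((sdX q/sX)\<^sup>2)"
        by (rule ef_dec_le[OF zpos[OF sdpos[OF v]] zle[OF V] z1])
      then show "ef ((s1/sX)\<^sup>2) \<le> rel_entropy q prior" using lower[OF v] by simp
    next
      fix q assume v: "bvn_valid q" and V: "(sdX q)\<^sup>2 \<le> s1\<^sup>2"
        and le: "rel_entropy q prior \<le> ef ((s1/sX)\<^sup>2)"
      have "ef ((sdX q/sX)\<^sup>2) \<le> ef ((s1/sX)\<^sup>2)" using lower[OF v] le by simp
      then have "(sdX q/sX)\<^sup>2 = (s1/sX)\<^sup>2"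
        by (rule ef_dec_eq[OF zpos[OF sdpos[OF v]] zle[OF V] z1])
      then show "sdX q = s1" using zeq[OF _ sdpos[OF v] s1] by simp
    }
  qed
  have P5: "CoVaR_is \<alpha> prior (\<lambda>q. (sdX q)\<^sup>2 \<ge> s1\<^sup>2) c_eq" if lt: "sX\<^sup>2 < s1\<^sup>2"
    unfolding ceq
  proof (rule gen[OF s1])
    show "(sdX (qstar mX mY sX sY r s1))\<^sup>2 \<ge> s1\<^sup>2" using qsX[OF s1] by simp
  next
    have z1: "1 \<le> (s1/sX)\<^sup>2" using zle[of sX s1] lt one by simp
    {
      fix q assume v: "bvn_valid q" and V: "(sdX q)\<^sup>2 \<ge> s1\<^sup>2"
      have "ef ((s1/sX)\<^sup>2) \<le> ef ((sdX q/sX)\<^sup>2)"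
        by (rule ef_inc_le[OF z1 zle[OF V]])
      then show "ef ((s1/sX)\<^sup>2) \<le> rel_entropy q prior" using lower[OF v] by simp
    next
      fix q assume v: "bvn_valid q" and V: "(sdX q)\<^sup>2 \<ge> s1\<^sup>2"
        and le: "rel_entropy q prior \<le> ef ((s1/sX)\<^sup>2)"
      have "ef ((sdX q/sX)\<^sup>2) \<le> ef ((s1/sX)\<^sup>2)" using lower[OF v] le by simp
      then have "(sdX q/sX)\<^sup>2 = (s1/sX)\<^sup>2"
        by (rule ef_inc_eq[OF z1 zle[OF V]])
      then show "sdX q = s1" using zeq[OF _ sdpos[OF v] s1] by simp
    }
  qed
  show ?thesis
    apply (intro conjI impI)
        apply (rule P1)
       apply (erule P2)
      apply (erule P3)
     apply (erule P4)
    apply (erule P5)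
    done
qed


end
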